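(* Let $m\ge1$, $0<\lambda_1\le\dots\le\lambda_m$, $0<\Lambda_0\le\Lambda_1$, and let $a,b$ be positive definite $m\times m$ matrices with $\Lambda_0I\le a\le\Lambda_1I$ and $\Lambda_0I\le b\le\Lambda_1I$. For $w\in\mathbb{R}^m$ set $\theta=\Lambda_0^{-1}m\|a-b\|_s$ and $\phi=\Lambda_0^{-2}\|w\|^2\|a-b\|_s$. For any $M>0$ there is a constant $c_1=c_1(M)$ such that if $\theta,\phi<M$ then for all $t>0$, $$\Big|\frac{Q_m(w,\widetilde A(t))}{Q_m(w,\widetilde B(t))}-1\Big|\le c_1(\phi+\theta).$$
   Context: $E(s)$ is the diagonal matrix with entries $e^{-\lambda_is}$; $a(t)=\int_0^tE(s)\,a\,E(s)\,ds$ (so $a_{ij}(t)=a_{ij}(1-e^{-(\lambda_i+\lambda_j)t})/(\lambda_i+\lambda_j)$); $g(t)$ is diagonal with $g_{ii}(t)=(1-e^{-2\lambda_it})/(2\lambda_i)$ and $G(t)=g(t)^{-1}$; $\widetilde a(t)=G(t)^{1/2}a(t)G(t)^{1/2}$ and $\widetilde A(t)=\widetilde a(t)^{-1}$; $b(t),\widetilde b(t),\widetilde B(t)$ are defined analogously from $b$. $\|c\|_s=\max\{\sup_i\sum_j|c_{ij}|,\sup_j\sum_i|c_{ij}|\}$. $Q_m(w,C)=(2\pi)^{-m/2}(\det C)^{1/2}e^{-\langle w,Cw\rangle/2}$ for positive definite $C$. *)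

theory Defs
  imports "Jordan_Normal_Form.Determinant"
begin

text \<open>Real m x m matrices are represented as Jordan_Normal_Form matrices in carrier_mat m m,
  vectors in R^m as elements of carrier_vec m; indices range over 0..m-1.\<close>

definition pos_def_mat :: "nat \<Rightarrow> real mat \<Rightarrow> bool" where
  "pos_def_mat m A \<longleftrightarrow> A \<in> carrier_mat m m \<and> transpose_mat A = A \<and>
     (\<forall>x \<in> carrier_vec m. x \<noteq> 0\<^sub>v m \<longrightarrow> x \<bullet> (A *\<^sub>v x) > 0)"

definition loewner_between :: "nat \<Rightarrow> real \<Rightarrow> real \<Rightarrow> real mat \<Rightarrow> bool" where
  "loewner_between m L0 L1 A \<longleftrightarrow>
     (\<forall>x \<in> carrier_vec m. L0 * (x \<bullet> x) \<le> x \<bullet> (A *\<^sub>v x) \<and> x \<bullet> (A *\<^sub>v x) \<le> L1 * (x \<bullet> x))"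

definition inv_mat :: "real mat \<Rightarrow> real mat" where
  "inv_mat A = (THE B. B \<in> carrier_mat (dim_row A) (dim_row A) \<and> inverts_mat A B \<and> inverts_mat B A)"

text \<open>a(t) = int_0^t E(s) a E(s) ds, written entrywise.\<close>
definition mat_t :: "nat \<Rightarrow> (nat \<Rightarrow> real) \<Rightarrow> real mat \<Rightarrow> real \<Rightarrow> real mat" where
  "mat_t m lam a t = mat m m (\<lambda>(i,j). a $$ (i,j) * (1 - exp (-(lam i + lam j) * t)) / (lam i + lam j))"

definition g_mat :: "nat \<Rightarrow> (nat \<Rightarrow> real) \<Rightarrow> real \<Rightarrow> real mat" where
  "g_mat m lam t = mat m m (\<lambda>(i,j). if i = j then (1 - exp (-2 * lam i * t)) / (2 * lam i) else 0)"

definition G_mat :: "nat \<Rightarrow> (nat \<Rightarrow> real) \<Rightarrow> real \<Rightarrow> real mat" where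
  "G_mat m lam t = inv_mat (g_mat m lam t)"

definition G_half :: "nat \<Rightarrow> (nat \<Rightarrow> real) \<Rightarrow> real \<Rightarrow> real mat" where
  "G_half m lam t = mat m m (\<lambda>(i,j). if i = j then sqrt (G_mat m lam t $$ (i,i)) else 0)"

definition tilde_mat :: "nat \<Rightarrow> (nat \<Rightarrow> real) \<Rightarrow> real mat \<Rightarrow> real \<Rightarrow> real mat" where
  "tilde_mat m lam a t = G_half m lam t * mat_t m lam a t * G_half m lam t"

definition Tilde_inv :: "nat \<Rightarrow> (nat \<Rightarrow> real) \<Rightarrow> real mat \<Rightarrow> real \<Rightarrow> real mat" where
  "Tilde_inv m lam a t = inv_mat (tilde_mat m lam a t)"

definition s_norm :: "nat \<Rightarrow> real mat \<Rightarrow> real" where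
  "s_norm m c = max (Max {(\<Sum>j<m. \<bar>c $$ (i,j)\<bar>) | i. i < m})
                    (Max {(\<Sum>i<m. \<bar>c $$ (i,j)\<bar>) | j. j < m})"

definition Qm :: "nat \<Rightarrow> real vec \<Rightarrow> real mat \<Rightarrow> real" where
  "Qm m w C = (2 * pi) powr (- real m / 2) * sqrt (det C) * exp (- (w \<bullet> (C *\<^sub>v w)) / 2)"

definition vnorm :: "real vec \<Rightarrow> real" where
  "vnorm w = sqrt (w \<bullet> w)"

end

theory Submission
  imports Defs "Jordan_Normal_Form.Char_Poly" "HOL-Analysis.Analysis"
begin


unbundle no vec_syntax
unbundle no inner_syntax
hide_type (open) Finite_Cartesian_Product.vec
hide_const (open) Finite_Cartesian_Product.vec Finite_Cartesian_Product.mat Determinants.det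


lemma inv_mat_eq:
  fixes A B :: "real mat"
  assumes A: "A \<in> carrier_mat n n" and B: "B \<in> carrier_mat n n" and AB: "A * B = 1\<^sub>m n"
  shows "inv_mat A = B"
proof -
  have BA: "B * A = 1\<^sub>m n" using mat_mult_left_right_inverse[OF A B AB] .
  show ?thesis unfolding inv_mat_def
  proof (rule the_equality)
    show "B \<in> carrier_mat (dim_row A) (dim_row A) \<and> inverts_mat A B \<and> inverts_mat B A"
      using A B AB BA by (auto simp: inverts_mat_def)
  next
    fix B' assume h: "B' \<in> carrier_mat (dim_row A) (dim_row A) \<and> inverts_mat A B' \<and> inverts_mat B' A"
    hence B': "B' \<in> carrier_mat n n" and AB': "A * B' = 1\<^sub>m n" using A by (auto simp: inverts_mat_def)
    have "B' = (B * A) * B'" using BA B' by simp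
    also have "\<dots> = B * (A * B')" using A B B' by (simp add: assoc_mult_mat)
    also have "\<dots> = B" using AB' B by simp
    finally show "B' = B" .
  qed
qed

lemma qf_sum:
  fixes A :: "'a::comm_ring mat"
  assumes A: "A \<in> carrier_mat m m" and x: "x \<in> carrier_vec m" and y: "y \<in> carrier_vec m"
  shows "x \<bullet> (A *\<^sub>v y) = (\<Sum>i=0..<m. \<Sum>j=0..<m. x$i * A$$(i,j) * y$j)"
  using A x y by (auto simp: scalar_prod_def sum_distrib_left mult.assoc intro!: sum.cong)

lemma s_norm_row:
  assumes "i < m" shows "(\<Sum>j<m. \<bar>c $$ (i,j)\<bar>) \<le> s_norm m c"
proof -
  have "(\<Sum>j<m. \<bar>c $$ (i,j)\<bar>) \<le> Max {(\<Sum>j<m. \<bar>c $$ (i,j)\<bar>) | i. i < m}"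
    by (rule Max_ge) (use assms in auto)
  thus ?thesis unfolding s_norm_def by linarith
qed

lemma s_norm_col:
  assumes "j < m" shows "(\<Sum>i<m. \<bar>c $$ (i,j)\<bar>) \<le> s_norm m c"
proof -
  have "(\<Sum>i<m. \<bar>c $$ (i,j)\<bar>) \<le> Max {(\<Sum>i<m. \<bar>c $$ (i,j)\<bar>) | j. j < m}"
    by (rule Max_ge) (use assms in auto)
  thus ?thesis unfolding s_norm_def by linarith
qed

lemma bilin_bound:
  fixes E c :: "nat \<Rightarrow> nat \<Rightarrow> real" and p q :: "nat \<Rightarrow> real"
  assumes Ec: "\<And>i j. i < m \<Longrightarrow> j < m \<Longrightarrow> \<bar>E i j\<bar> \<le> \<bar>c i j\<bar>"
    and R: "\<And>i. i < m \<Longrightarrow> (\<Sum>j<m. \<bar>c i j\<bar>) \<le> \<sigma>"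
    and C: "\<And>j. j < m \<Longrightarrow> (\<Sum>i<m. \<bar>c i j\<bar>) \<le> \<sigma>"
  shows "\<bar>\<Sum>i<m. \<Sum>j<m. p i * E i j * q j\<bar> \<le> \<sigma> / 2 * ((\<Sum>i<m. (p i)^2) + (\<Sum>j<m. (q j)^2))"
proof -
  have "\<bar>\<Sum>i<m. \<Sum>j<m. p i * E i j * q j\<bar> \<le> (\<Sum>i<m. \<Sum>j<m. \<bar>p i * E i j * q j\<bar>)"
    by (rule order_trans[OF sum_abs], rule sum_mono, rule sum_abs)
  also have "\<dots> \<le> (\<Sum>i<m. \<Sum>j<m. \<bar>c i j\<bar> * ((p i)^2 / 2 + (q j)^2 / 2))"
  proof (rule sum_mono, rule sum_mono)
    fix i j assume "i \<in> {..<m}" "j \<in> {..<m}"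
    hence e: "\<bar>E i j\<bar> \<le> \<bar>c i j\<bar>" using Ec by auto
    have pq: "\<bar>p i\<bar> * \<bar>q j\<bar> \<le> (p i)^2 / 2 + (q j)^2 / 2"
      using sum_squares_bound[of "\<bar>p i\<bar>" "\<bar>q j\<bar>"] by (simp add: power2_eq_square)
    have "\<bar>p i * E i j * q j\<bar> = \<bar>E i j\<bar> * (\<bar>p i\<bar> * \<bar>q j\<bar>)" by (simp add: abs_mult)
    also have "\<dots> \<le> \<bar>c i j\<bar> * (\<bar>p i\<bar> * \<bar>q j\<bar>)" by (rule mult_right_mono[OF e]) simp
    also have "\<dots> \<le> \<bar>c i j\<bar> * ((p i)^2 / 2 + (q j)^2 / 2)" by (rule mult_left_mono[OF pq]) simp
    finally show "\<bar>p i * E i j * q j\<bar> \<le> \<bar>c i j\<bar> * ((p i)^2 / 2 + (q j)^2 / 2)" .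
  qed
  also have "\<dots> = (\<Sum>i<m. (p i)^2 / 2 * (\<Sum>j<m. \<bar>c i j\<bar>)) + (\<Sum>j<m. (q j)^2 / 2 * (\<Sum>i<m. \<bar>c i j\<bar>))"
  proof -
    have 1: "(\<Sum>i<m. \<Sum>j<m. \<bar>c i j\<bar> * ((p i)^2 / 2 + (q j)^2 / 2))
       = (\<Sum>i<m. \<Sum>j<m. \<bar>c i j\<bar> * ((p i)^2 / 2)) + (\<Sum>i<m. \<Sum>j<m. \<bar>c i j\<bar> * ((q j)^2 / 2))"
      by (simp add: distrib_left sum.distrib)
    have 2: "(\<Sum>i<m. \<Sum>j<m. \<bar>c i j\<bar> * ((p i)^2 / 2)) = (\<Sum>i<m. (p i)^2 / 2 * (\<Sum>j<m. \<bar>c i j\<bar>))"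
      unfolding sum_distrib_left by (intro sum.cong refl) (simp add: algebra_simps)
    have 3: "(\<Sum>i<m. \<Sum>j<m. \<bar>c i j\<bar> * ((q j)^2 / 2)) = (\<Sum>j<m. \<Sum>i<m. \<bar>c i j\<bar> * ((q j)^2 / 2))"
      by (rule sum.swap)
    have 4: "(\<Sum>j<m. \<Sum>i<m. \<bar>c i j\<bar> * ((q j)^2 / 2)) = (\<Sum>j<m. (q j)^2 / 2 * (\<Sum>i<m. \<bar>c i j\<bar>))"
      unfolding sum_distrib_left by (intro sum.cong refl) (simp add: algebra_simps)
    show ?thesis using 1 2 3 4 by simp
  qed
  also have "\<dots> \<le> (\<Sum>i<m. (p i)^2 / 2 * \<sigma>) + (\<Sum>j<m. (q j)^2 / 2 * \<sigma>)"
    by (intro add_mono sum_mono mult_left_mono) (auto simp: R C)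
  also have "\<dots> = \<sigma> / 2 * ((\<Sum>i<m. (p i)^2) + (\<Sum>j<m. (q j)^2))"
    by (simp add: algebra_simps sum_distrib_left sum_distrib_right sum_divide_distrib)
  finally show ?thesis .
qed




lemma prod_bounds:
  fixes xs :: "real list"
  assumes "\<forall>x\<in>set xs. lo \<le> x \<and> x \<le> hi" and "0 \<le> lo"
  shows "lo ^ length xs \<le> prod_list xs \<and> prod_list xs \<le> hi ^ length xs"
  using assms
proof (induction xs)
  case Nil then show ?case by simp
next
  case (Cons x xs)
  hence ih: "lo ^ length xs \<le> prod_list xs" "prod_list xs \<le> hi ^ length xs" and x: "lo \<le> x" "x \<le> hi" by auto
  have "0 \<le> lo ^ length xs" using Cons.prems by simp
  hence p0: "0 \<le> prod_list xs" using ih by linarith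
  have "lo * lo ^ length xs \<le> x * prod_list xs" by (rule mult_mono) (use x ih p0 Cons.prems in auto)
  moreover have "x * prod_list xs \<le> hi * hi ^ length xs" by (rule mult_mono) (use x ih p0 Cons.prems in auto)
  ultimately show ?case by simp
qed

lemma exp_lower_aux: fixes d :: real assumes "0 \<le> d" "d \<le> 1/2" shows "exp (-2*d) \<le> 1 - d"
proof -
  have e: "1 + 2*d \<le> exp (2*d)" using exp_ge_add_one_self[of "2*d"] by simp
  have dd: "d*(d*2) \<le> d" using mult_left_mono[of "d*2" 1 d] assms by simp
  have "1 \<le> (1 - d) * (1 + 2*d)" using dd by (simp add: algebra_simps)
  also have "\<dots> \<le> (1 - d) * exp (2*d)" by (rule mult_left_mono[OF e]) (use assms in auto)
  finally have "1 \<le> (1 - d) * exp (2*d)" .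
  hence "1 / exp (2*d) \<le> 1 - d" by (simp add: field_simps)
  thus ?thesis by (simp add: exp_minus_inverse exp_minus field_simps)
qed

lemma sqrt_exp: "sqrt (exp x) = exp (x/2)"
proof -
  have "exp (x/2) ^ 2 = exp x" by (simp add: exp_double[symmetric] power2_eq_square mult_exp_exp)
  thus ?thesis by (metis exp_ge_zero real_sqrt_unique)
qed

lemma final_ineq:
  fixes \<mu>s :: "real list"
  assumes len: "length \<mu>s = m" and m: "m \<ge> 1"
    and pos: "\<forall>\<mu>\<in>set \<mu>s. 0 < \<mu> \<and> \<bar>\<mu> - 1\<bar> \<le> \<delta>"
    and \<theta>: "\<theta> = real m * \<delta>" and \<theta>M: "\<theta> < M" and X: "\<bar>X\<bar> \<le> \<phi>" and \<phi>M: "\<phi> < M"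
  shows "\<bar>sqrt (prod_list \<mu>s) * exp (-X/2) - 1\<bar> \<le> (2 + exp M) * (\<phi> + \<theta>)"
proof -
  obtain \<mu>0 where "\<mu>0 \<in> set \<mu>s" using len m by (cases \<mu>s) auto
  hence d0: "0 \<le> \<delta>" using pos by force
  have \<phi>0: "0 \<le> \<phi>" using X by simp
  have \<theta>0: "0 \<le> \<theta>" using \<theta> d0 by simp
  define P where "P = prod_list \<mu>s"
  define R where "R = sqrt P * exp (-X/2)"
  have b1: "0 ^ m \<le> P \<and> P \<le> (1 + \<delta>) ^ m"
    unfolding P_def len[symmetric] by (rule prod_bounds) (use pos in force)+
  hence P0: "0 \<le> P" using m by (cases m) auto
  have R0: "0 \<le> R" unfolding R_def using P0 by simp
  have "(1 + \<delta>) ^ m \<le> exp \<delta> ^ m" by (rule power_mono) (use exp_ge_add_one_self[of \<delta>] d0 in auto)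
  also have "\<dots> = exp \<theta>" unfolding \<theta> by (simp add: exp_of_nat_mult)
  finally have "P \<le> exp \<theta>" using b1 by simp
  hence "sqrt P \<le> exp (\<theta>/2)" using sqrt_exp[of \<theta>] real_sqrt_le_mono by metis
  moreover have "exp (-X/2) \<le> exp (\<phi>/2)" using X by simp
  ultimately have "R \<le> exp (\<theta>/2) * exp (\<phi>/2)" unfolding R_def by (intro mult_mono) auto
  also have "\<dots> = exp ((\<theta> + \<phi>)/2)" by (simp add: mult_exp_exp add_divide_distrib)
  finally have Rup: "R \<le> exp ((\<theta> + \<phi>)/2)" .
  define u where "u = (\<theta> + \<phi>)/2"
  have u0: "0 \<le> u" and uM: "u \<le> M" unfolding u_def using \<theta>0 \<phi>0 \<theta>M \<phi>M by auto
  have "1 - u \<le> exp (-u)" using exp_ge_add_one_self[of "-u"] by simp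
  hence "exp u * (1 - u) \<le> exp u * exp (-u)" by (rule mult_left_mono) simp
  hence "exp u - 1 \<le> u * exp u" by (simp add: exp_minus field_simps)
  also have "\<dots> \<le> u * exp M" using u0 uM by (intro mult_left_mono) auto
  finally have up: "R - 1 \<le> u * exp M" using Rup unfolding u_def by simp
  have key: "(2 + exp M) * (\<phi> + \<theta>) = 2*(\<phi> + \<theta>) + exp M * (\<phi> + \<theta>)" by (simp add: algebra_simps)
  have k0: "0 \<le> exp M * (\<phi> + \<theta>)" using \<theta>0 \<phi>0 by simp
  have ue: "u * exp M = exp M * (\<phi> + \<theta>) / 2" unfolding u_def by (simp add: algebra_simps)
  have c1: "u * exp M \<le> (2 + exp M) * (\<phi> + \<theta>)"
    unfolding ue key by (rule add_increasing) (use k0 \<theta>0 \<phi>0 in auto)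
  have low: "1 - R \<le> (2 + exp M) * (\<phi> + \<theta>)"
  proof (cases "\<delta> \<le> 1/2")
    case True
    have b2: "(1 - \<delta>) ^ m \<le> P \<and> P \<le> (1 + \<delta>) ^ m"
      unfolding P_def len[symmetric] by (rule prod_bounds) (use pos True in force)+
    have "exp (-2*\<delta>) ^ m \<le> (1 - \<delta>) ^ m" by (rule power_mono) (use exp_lower_aux[OF d0 True] in auto)
    hence "exp (-2*\<theta>) \<le> P" using b2 unfolding \<theta> by (simp add: exp_of_nat_mult[symmetric] algebra_simps)
    hence "exp (-\<theta>) \<le> sqrt P" using sqrt_exp[of "-2*\<theta>"] real_sqrt_le_mono by fastforce
    moreover have "exp (-\<phi>/2) \<le> exp (-X/2)" using X by simp
    ultimately have "exp (-\<theta>) * exp (-\<phi>/2) \<le> R" unfolding R_def using P0 by (intro mult_mono) auto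
    moreover have "exp (-\<theta>) * exp (-\<phi>/2) = exp (-(\<theta> + \<phi>/2))" by (simp add: mult_exp_exp)
    moreover have "1 - (\<theta> + \<phi>/2) \<le> exp (-(\<theta> + \<phi>/2))" using exp_ge_add_one_self[of "-(\<theta> + \<phi>/2)"] by linarith
    ultimately have "1 - R \<le> \<theta> + \<phi>/2" by linarith
    also have "\<dots> \<le> (2 + exp M) * (\<phi> + \<theta>)" unfolding key by (rule add_increasing2) (use k0 \<theta>0 \<phi>0 in auto)
    finally show ?thesis .
  next
    case False
    have "\<delta> \<le> \<theta>" unfolding \<theta> using mult_right_mono[of 1 "real m" \<delta>] m d0 by simp
    hence "1 \<le> 2 * \<theta>" using False by simp
    hence "1 - R \<le> 2 * \<theta>" using R0 by simp
    also have "\<dots> \<le> (2 + exp M) * (\<phi> + \<theta>)" unfolding key by (rule add_increasing2) (use k0 \<theta>0 \<phi>0 in auto)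
    finally show ?thesis .
  qed
  show ?thesis using up c1 low unfolding R_def P_def by linarith
qed




definition hh :: "real \<Rightarrow> real \<Rightarrow> real" where "hh t c = (1 - exp (-c*t)) / c"

lemma hh_pos: "c > 0 \<Longrightarrow> t > 0 \<Longrightarrow> hh t c > 0"
  unfolding hh_def by (auto intro!: divide_pos_pos simp: mult_pos_pos)

lemma exp_int:
  assumes c: "c > 0" and t: "0 \<le> t"
  shows "((\<lambda>\<tau>. exp (-c*\<tau>)) has_integral hh t c) {0..t}"
proof -
  have d: "\<And>\<tau>. ((\<lambda>\<tau>. - exp (-c*\<tau>) / c) has_vector_derivative exp (-c*\<tau>)) (at \<tau> within {0..t})"
  proof -
    fix \<tau>
    have "((\<lambda>\<tau>. - exp (-c*\<tau>) / c) has_real_derivative exp (-c*\<tau>)) (at \<tau> within {0..t})"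
      using c by (auto intro!: derivative_eq_intros)
    thus "((\<lambda>\<tau>. - exp (-c*\<tau>) / c) has_vector_derivative exp (-c*\<tau>)) (at \<tau> within {0..t})"
      by (simp add: has_real_derivative_iff_has_vector_derivative)
  qed
  have "((\<lambda>\<tau>. exp (-c*\<tau>)) has_integral ((- exp (-c*t) / c) - (- exp (-c*0) / c))) {0..t}"
    by (rule fundamental_theorem_of_calculus[OF t]) (use d in auto)
  thus ?thesis unfolding hh_def by (simp add: diff_divide_distrib)
qed

lemma exp_prod: fixes x y \<tau> :: real shows "exp (-x*\<tau>) * exp (-y*\<tau>) = exp (-(x + y) * \<tau>)"
proof -
  have eq: "-(x + y) * \<tau> = -x*\<tau> + -y*\<tau>" by (simp add: algebra_simps)
  show ?thesis by (simp only: eq mult_exp_exp)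
qed

lemma quad_int:
  fixes z :: "nat \<Rightarrow> real" and A :: "nat \<Rightarrow> nat \<Rightarrow> real"
  assumes lam: "\<forall>i<m. lam i > 0" and t: "0 \<le> t"
  shows "((\<lambda>\<tau>. \<Sum>i<m. \<Sum>j<m. (z i * exp (-lam i*\<tau>)) * A i j * (z j * exp (-lam j*\<tau>)))
     has_integral (\<Sum>i<m. \<Sum>j<m. z i * A i j * z j * hh t (lam i + lam j))) {0..t}"
proof (rule has_integral_sum, simp, rule has_integral_sum, simp)
  fix i j assume i: "i \<in> {..<m}" and j: "j \<in> {..<m}"
  have lp: "lam i + lam j > 0" using lam i j by (auto intro!: add_pos_pos)
  have "((\<lambda>\<tau>. (z i * A i j * z j) * exp (-(lam i + lam j)*\<tau>)) has_integral (z i * A i j * z j) * hh t (lam i + lam j)) {0..t}"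
    by (rule has_integral_mult_right, rule exp_int) (use lp t in auto)
  moreover have pe: "\<And>\<tau>. (z i * exp (-lam i*\<tau>)) * A i j * (z j * exp (-lam j*\<tau>)) = (z i * A i j * z j) * exp (-(lam i + lam j)*\<tau>)"
  proof -
    fix \<tau>
    have "(z i * exp (-lam i*\<tau>)) * A i j * (z j * exp (-lam j*\<tau>)) = (z i * A i j * z j) * (exp (-lam i*\<tau>) * exp (-lam j*\<tau>))"
      by (simp add: algebra_simps)
    also have "exp (-lam i*\<tau>) * exp (-lam j*\<tau>) = exp (-(lam i + lam j)*\<tau>)" by (rule exp_prod)
    finally show "(z i * exp (-lam i*\<tau>)) * A i j * (z j * exp (-lam j*\<tau>)) = (z i * A i j * z j) * exp (-(lam i + lam j)*\<tau>)" .
  qed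
  ultimately show "((\<lambda>\<tau>. (z i * exp (-lam i*\<tau>)) * A i j * (z j * exp (-lam j*\<tau>))) has_integral z i * A i j * z j * hh t (lam i + lam j)) {0..t}"
    unfolding pe by simp
qed

lemma lower_int:
  fixes z :: "nat \<Rightarrow> real"
  assumes a: "a \<in> carrier_mat m m" and lb: "loewner_between m L0 L1 a"
    and lam: "\<forall>i<m. lam i > 0" and t: "0 \<le> t"
  shows "L0 * (\<Sum>i<m. (z i)^2 * hh t (2 * lam i)) \<le> (\<Sum>i<m. \<Sum>j<m. z i * a$$(i,j) * z j * hh t (lam i + lam j))"
proof -
  have f: "((\<lambda>\<tau>. \<Sum>i<m. \<Sum>j<m. (z i * exp (-lam i*\<tau>)) * a$$(i,j) * (z j * exp (-lam j*\<tau>)))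
     has_integral (\<Sum>i<m. \<Sum>j<m. z i * a$$(i,j) * z j * hh t (lam i + lam j))) {0..t}"
    using quad_int[OF lam t, of z "\<lambda>i j. a$$(i,j)"] by simp
  have g: "((\<lambda>\<tau>. L0 * (\<Sum>i<m. (z i * exp (-lam i*\<tau>))^2)) has_integral L0 * (\<Sum>i<m. (z i)^2 * hh t (2 * lam i))) {0..t}"
  proof (rule has_integral_mult_right, rule has_integral_sum, simp)
    fix i assume i: "i \<in> {..<m}"
    have "((\<lambda>\<tau>. (z i)^2 * exp (-(2 * lam i)*\<tau>)) has_integral (z i)^2 * hh t (2 * lam i)) {0..t}"
      by (rule has_integral_mult_right, rule exp_int) (use lam i t in auto)
    moreover have pe: "\<And>\<tau>. (z i * exp (-lam i*\<tau>))^2 = (z i)^2 * exp (-(2 * lam i)*\<tau>)"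
    proof -
      fix \<tau>
      have "(z i * exp (-lam i*\<tau>))^2 = (z i)^2 * (exp (-lam i*\<tau>) * exp (-lam i*\<tau>))"
        by (simp add: power2_eq_square)
      also have "exp (-lam i*\<tau>) * exp (-lam i*\<tau>) = exp (-(2 * lam i)*\<tau>)"
        using exp_prod[of "lam i" \<tau> "lam i"] by simp
      finally show "(z i * exp (-lam i*\<tau>))^2 = (z i)^2 * exp (-(2 * lam i)*\<tau>)" .
    qed
    ultimately show "((\<lambda>\<tau>. (z i * exp (-lam i*\<tau>))^2) has_integral (z i)^2 * hh t (2 * lam i)) {0..t}" unfolding pe by simp
  qed
  show ?thesis
  proof (rule has_integral_le[OF g f])
    fix \<tau> :: real
    define u where "u = Matrix.vec m (\<lambda>i. z i * exp (-lam i*\<tau>))"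
    have u: "u \<in> carrier_vec m" unfolding u_def by simp
    have "L0 * (u \<bullet> u) \<le> u \<bullet> (a *\<^sub>v u)" using lb u unfolding loewner_between_def by blast
    moreover have "u \<bullet> u = (\<Sum>i<m. (z i * exp (-lam i*\<tau>))^2)"
      unfolding u_def scalar_prod_def by (simp add: atLeast0LessThan power2_eq_square)
    moreover have "u \<bullet> (a *\<^sub>v u) = (\<Sum>i<m. \<Sum>j<m. (z i * exp (-lam i*\<tau>)) * a$$(i,j) * (z j * exp (-lam j*\<tau>)))"
      unfolding qf_sum[OF a u u] unfolding u_def by (simp add: atLeast0LessThan)
    ultimately show "L0 * (\<Sum>i<m. (z i * exp (-lam i*\<tau>))^2) \<le> (\<Sum>i<m. \<Sum>j<m. (z i * exp (-lam i*\<tau>)) * a$$(i,j) * (z j * exp (-lam j*\<tau>)))"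
      by simp
  qed
qed

lemma cs_int:
  assumes x: "x > 0" and y: "y > 0" and t: "0 < t"
  shows "hh t (x + y) \<le> sqrt (hh t (2*x)) * sqrt (hh t (2*y))"
proof -
  define gx gy where "gx = hh t (2*x)" and "gy = hh t (2*y)"
  have gx: "gx > 0" and gy: "gy > 0" unfolding gx_def gy_def using x y t by (auto intro!: hh_pos)
  define \<alpha> \<beta> where "\<alpha> = sqrt gy" and "\<beta> = sqrt gx"
  have i1: "((\<lambda>\<tau>. \<alpha>^2 * exp (-(2*x)*\<tau>)) has_integral \<alpha>^2 * gx) {0..t}"
    unfolding gx_def by (rule has_integral_mult_right, rule exp_int) (use x t in auto)
  have i2: "((\<lambda>\<tau>. (2*\<alpha>*\<beta>) * exp (-(x+y)*\<tau>)) has_integral (2*\<alpha>*\<beta>) * hh t (x+y)) {0..t}"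
    by (rule has_integral_mult_right, rule exp_int) (use x y t in auto)
  have i3: "((\<lambda>\<tau>. \<beta>^2 * exp (-(2*y)*\<tau>)) has_integral \<beta>^2 * gy) {0..t}"
    unfolding gy_def by (rule has_integral_mult_right, rule exp_int) (use y t in auto)
  have i: "((\<lambda>\<tau>. \<alpha>^2 * exp (-(2*x)*\<tau>) - (2*\<alpha>*\<beta>) * exp (-(x+y)*\<tau>) + \<beta>^2 * exp (-(2*y)*\<tau>))
     has_integral (\<alpha>^2 * gx - (2*\<alpha>*\<beta>) * hh t (x+y) + \<beta>^2 * gy)) {0..t}"
    by (intro has_integral_add has_integral_diff i1 i2 i3)
  have nn: "0 \<le> \<alpha>^2 * gx - (2*\<alpha>*\<beta>) * hh t (x+y) + \<beta>^2 * gy"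
  proof (rule has_integral_nonneg[OF i])
    fix \<tau> :: real
    have "\<alpha>^2 * exp (-(2*x)*\<tau>) - (2*\<alpha>*\<beta>) * exp (-(x+y)*\<tau>) + \<beta>^2 * exp (-(2*y)*\<tau>)
       = (\<alpha> * exp (-x*\<tau>) - \<beta> * exp (-y*\<tau>))^2"
      using exp_prod[of x \<tau> x] exp_prod[of x \<tau> y] exp_prod[of y \<tau> y]
      by (simp add: power2_eq_square algebra_simps)
    thus "0 \<le> \<alpha>^2 * exp (-(2*x)*\<tau>) - (2*\<alpha>*\<beta>) * exp (-(x+y)*\<tau>) + \<beta>^2 * exp (-(2*y)*\<tau>)" by simp
  qed
  have a2: "\<alpha>^2 = gy" and b2: "\<beta>^2 = gx" unfolding \<alpha>_def \<beta>_def using gx gy by auto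
  have ab: "\<alpha>*\<beta> > 0" unfolding \<alpha>_def \<beta>_def using gx gy by auto
  have 1: "2*\<alpha>*\<beta> * hh t (x+y) \<le> 2 * gx * gy" using nn a2 b2 by (simp add: algebra_simps)
  have 2: "gx * gy = (\<alpha>*\<beta>) * (\<alpha>*\<beta>)" using a2 b2 by (simp add: power2_eq_square algebra_simps)
  have "(\<alpha>*\<beta>) * hh t (x+y) \<le> (\<alpha>*\<beta>) * (\<alpha>*\<beta>)" using 1 2 by (simp add: algebra_simps)
  hence "hh t (x+y) \<le> \<alpha>*\<beta>" using ab by (simp add: mult_le_cancel_left_pos)
  thus ?thesis unfolding \<alpha>_def \<beta>_def gx_def gy_def by (simp add: mult.commute)
qed




definition dg :: "nat \<Rightarrow> (nat \<Rightarrow> real) \<Rightarrow> real mat" where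
  "dg m f = Matrix.mat m m (\<lambda>(i,j). if i = j then f i else 0)"

lemma dg_carrier[simp]: "dg m f \<in> carrier_mat m m" unfolding dg_def by simp

lemma dg_left: assumes M: "M \<in> carrier_mat m n" and i: "i < m" and j: "j < n"
  shows "(dg m f * M) $$ (i,j) = f i * M $$ (i,j)"
proof -
  have "(dg m f * M) $$ (i,j) = (\<Sum>k=0..<m. (if i = k then f i else 0) * M $$ (k,j))"
    using M i j by (simp add: dg_def scalar_prod_def)
  also have "\<dots> = (\<Sum>k=0..<m. if k = i then f i * M $$ (i,j) else 0)"
    by (rule sum.cong) auto
  also have "\<dots> = f i * M $$ (i,j)" using i by simp
  finally show ?thesis .
qed

lemma dg_right: assumes M: "M \<in> carrier_mat n m" and i: "i < n" and j: "j < m"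
  shows "(M * dg m f) $$ (i,j) = M $$ (i,j) * f j"
proof -
  have "(M * dg m f) $$ (i,j) = (\<Sum>k=0..<m. M $$ (i,k) * (if k = j then f k else 0))"
    using M i j by (simp add: dg_def scalar_prod_def)
  also have "\<dots> = (\<Sum>k=0..<m. if k = j then M $$ (i,j) * f j else 0)"
    by (rule sum.cong) auto
  also have "\<dots> = M $$ (i,j) * f j" using j by simp
  finally show ?thesis .
qed

lemma dg_mult: "dg m f * dg m g = dg m (\<lambda>i. f i * g i)"
proof (rule eq_matI)
  fix i j assume "i < dim_row (dg m (\<lambda>i. f i * g i))" "j < dim_col (dg m (\<lambda>i. f i * g i))"
  hence i: "i < m" and j: "j < m" by (auto simp: dg_def)
  have "(dg m f * dg m g) $$ (i,j) = f i * dg m g $$ (i,j)" by (rule dg_left[of _ m m]) (use i j in auto)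
  thus "(dg m f * dg m g) $$ (i,j) = dg m (\<lambda>i. f i * g i) $$ (i,j)" using i j by (simp add: dg_def)
qed (auto simp: dg_def)

lemma g_mat_dg: "g_mat m lam t = dg m (\<lambda>i. hh t (2 * lam i))"
  unfolding g_mat_def dg_def hh_def by (rule eq_matI) auto

lemma dg_one: assumes "\<And>i. i < m \<Longrightarrow> f i = 1" shows "dg m f = 1\<^sub>m m"
  using assms by (auto simp: dg_def)

context
  fixes m :: nat and lam :: "nat \<Rightarrow> real" and t :: real
  assumes lam: "\<forall>i<m. lam i > 0" and t: "t > 0"
begin

lemma gpos: "i < m \<Longrightarrow> hh t (2 * lam i) > 0"
  using lam t by (auto intro!: hh_pos)

lemma G_mat_dg: "G_mat m lam t = dg m (\<lambda>i. 1 / hh t (2 * lam i))"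
  unfolding G_mat_def g_mat_dg
  by (rule inv_mat_eq[of _ m]) (auto simp: dg_mult intro!: dg_one dest: gpos)

lemma G_half_dg: "G_half m lam t = dg m (\<lambda>i. sqrt (1 / hh t (2 * lam i)))"
  unfolding G_half_def G_mat_dg by (rule eq_matI) (auto simp: dg_def)

lemma mat_t_carrier[simp]: "mat_t m lam a t \<in> carrier_mat m m" unfolding mat_t_def by simp

lemma dgmt_carrier[simp]: "dg m f * mat_t m lam a t \<in> carrier_mat m m"
  by (rule mult_carrier_mat[OF dg_carrier mat_t_carrier])

lemma tilde_carrier[simp]: "tilde_mat m lam a t \<in> carrier_mat m m"
  unfolding tilde_mat_def G_half_dg by (rule mult_carrier_mat[OF dgmt_carrier dg_carrier])

lemma tilde_dims[simp]: "dim_row (tilde_mat m lam a t) = m" "dim_col (tilde_mat m lam a t) = m"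
  using carrier_matD[OF tilde_carrier[of a]] by auto

lemma tilde_entry: assumes i: "i < m" and j: "j < m"
  shows "tilde_mat m lam a t $$ (i,j) =
     sqrt (1 / hh t (2 * lam i)) * (a $$ (i,j) * hh t (lam i + lam j)) * sqrt (1 / hh t (2 * lam j))"
proof -
  have "tilde_mat m lam a t $$ (i,j) = (dg m (\<lambda>i. sqrt (1 / hh t (2 * lam i))) * mat_t m lam a t) $$ (i,j) * sqrt (1 / hh t (2 * lam j))"
    unfolding tilde_mat_def G_half_dg by (rule dg_right[of _ m]) (use i j in auto)
  also have "(dg m (\<lambda>i. sqrt (1 / hh t (2 * lam i))) * mat_t m lam a t) $$ (i,j) = sqrt (1 / hh t (2 * lam i)) * mat_t m lam a t $$ (i,j)"
    by (rule dg_left[of _ m m]) (use i j in auto)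
  also have "mat_t m lam a t $$ (i,j) = a $$ (i,j) * hh t (lam i + lam j)"
    using i j unfolding mat_t_def hh_def by simp
  finally show ?thesis .
qed

lemma k_bound: assumes i: "i < m" and j: "j < m"
  shows "0 \<le> sqrt (1 / hh t (2 * lam i)) * hh t (lam i + lam j) * sqrt (1 / hh t (2 * lam j))"
    and "sqrt (1 / hh t (2 * lam i)) * hh t (lam i + lam j) * sqrt (1 / hh t (2 * lam j)) \<le> 1"
proof -
  have gi: "hh t (2 * lam i) > 0" and gj: "hh t (2 * lam j) > 0" using gpos i j by auto
  have h: "hh t (lam i + lam j) > 0" using lam i j t by (auto intro!: hh_pos add_pos_pos)
  show "0 \<le> sqrt (1 / hh t (2 * lam i)) * hh t (lam i + lam j) * sqrt (1 / hh t (2 * lam j))"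
    using gi gj h by simp
  have cs: "hh t (lam i + lam j) \<le> sqrt (hh t (2 * lam i)) * sqrt (hh t (2 * lam j))"
    by (rule cs_int) (use lam i j t in auto)
  have "sqrt (1 / hh t (2 * lam i)) * hh t (lam i + lam j) * sqrt (1 / hh t (2 * lam j))
      = hh t (lam i + lam j) / (sqrt (hh t (2 * lam i)) * sqrt (hh t (2 * lam j)))"
    by (simp add: real_sqrt_divide)
  also have "\<dots> \<le> 1" using cs gi gj by simp
  finally show "sqrt (1 / hh t (2 * lam i)) * hh t (lam i + lam j) * sqrt (1 / hh t (2 * lam j)) \<le> 1" .
qed

lemma tilde_lower:
  assumes a: "a \<in> carrier_mat m m" and lb: "loewner_between m L0 L1 a" and x: "x \<in> carrier_vec m"
  shows "L0 * (x \<bullet> x) \<le> x \<bullet> (tilde_mat m lam a t *\<^sub>v x)"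
proof -
  define d where "d i = sqrt (1 / hh t (2 * lam i))" for i
  define z where "z i = d i * x $ i" for i
  have "L0 * (\<Sum>i<m. (z i)^2 * hh t (2 * lam i)) \<le> (\<Sum>i<m. \<Sum>j<m. z i * a$$(i,j) * z j * hh t (lam i + lam j))"
    by (rule lower_int[OF a lb lam]) (use t in auto)
  moreover have "(\<Sum>i<m. (z i)^2 * hh t (2 * lam i)) = x \<bullet> x"
  proof -
    have "(\<Sum>i<m. (z i)^2 * hh t (2 * lam i)) = (\<Sum>i<m. x $ i * x $ i)"
    proof (rule sum.cong[OF refl])
      fix i assume "i \<in> {..<m}"
      hence g: "hh t (2 * lam i) > 0" using gpos by auto
      have d2: "(d i)^2 = 1 / hh t (2 * lam i)" unfolding d_def using g by simp
      have "(z i)^2 * hh t (2 * lam i) = (d i)^2 * hh t (2 * lam i) * (x $ i * x $ i)"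
        unfolding z_def by (simp add: power2_eq_square algebra_simps)
      also have "\<dots> = x $ i * x $ i" unfolding d2 using g by simp
      finally show "(z i)^2 * hh t (2 * lam i) = x $ i * x $ i" .
    qed
    thus ?thesis using x by (simp add: scalar_prod_def atLeast0LessThan)
  qed
  moreover have "x \<bullet> (tilde_mat m lam a t *\<^sub>v x) = (\<Sum>i<m. \<Sum>j<m. z i * a$$(i,j) * z j * hh t (lam i + lam j))"
    unfolding qf_sum[OF tilde_carrier x x] atLeast0LessThan
    by (intro sum.cong refl) (simp add: tilde_entry z_def d_def)
  ultimately show ?thesis by simp
qed

lemma tilde_transpose:
  assumes a: "a \<in> carrier_mat m m" and sa: "transpose_mat a = a"
  shows "transpose_mat (tilde_mat m lam a t) = tilde_mat m lam a t"
proof (rule eq_matI)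
  fix i j assume i: "i < dim_row (tilde_mat m lam a t)" and j: "j < dim_col (tilde_mat m lam a t)"
  hence i: "i < m" and j: "j < m" by auto
  have "a $$ (j,i) = a $$ (i,j)" using sa a i j by (metis carrier_matD index_transpose_mat(1))
  thus "transpose_mat (tilde_mat m lam a t) $$ (i, j) = tilde_mat m lam a t $$ (i, j)"
    using i j by (simp add: tilde_entry add.commute)
qed auto

lemma tilde_diff_bilin:
  assumes a: "a \<in> carrier_mat m m" and b: "b \<in> carrier_mat m m"
    and p: "p \<in> carrier_vec m" and q: "q \<in> carrier_vec m"
  shows "\<bar>p \<bullet> ((tilde_mat m lam b t - tilde_mat m lam a t) *\<^sub>v q)\<bar> \<le> s_norm m (a - b) / 2 * (p \<bullet> p + q \<bullet> q)"
proof -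
  let ?E = "tilde_mat m lam b t - tilde_mat m lam a t"
  have E: "?E \<in> carrier_mat m m" by (rule minus_carrier_mat) simp
  have "\<bar>\<Sum>i<m. \<Sum>j<m. p$i * ?E$$(i,j) * q$j\<bar> \<le> s_norm m (a - b) / 2 * ((\<Sum>i<m. (p$i)^2) + (\<Sum>j<m. (q$j)^2))"
  proof (rule bilin_bound[where c = "\<lambda>i j. (a - b) $$ (i,j)"])
    fix i j assume i: "i < m" and j: "j < m"
    have eq: "?E $$ (i,j) = (b$$(i,j) - a$$(i,j)) * (sqrt (1 / hh t (2 * lam i)) * hh t (lam i + lam j) * sqrt (1 / hh t (2 * lam j)))"
      using i j by (simp add: tilde_entry algebra_simps)
    have "\<bar>?E $$ (i,j)\<bar> = \<bar>b$$(i,j) - a$$(i,j)\<bar> * (sqrt (1 / hh t (2 * lam i)) * hh t (lam i + lam j) * sqrt (1 / hh t (2 * lam j)))"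
      unfolding eq abs_mult[of "b$$(i,j) - a$$(i,j)"] abs_of_nonneg[OF k_bound(1)[OF i j]] ..
    also have "\<dots> \<le> \<bar>b$$(i,j) - a$$(i,j)\<bar> * 1"
      by (rule mult_left_mono[OF k_bound(2)[OF i j]]) simp
    also have "\<dots> = \<bar>(a - b) $$ (i,j)\<bar>" using a b i j by simp
    finally show "\<bar>?E $$ (i,j)\<bar> \<le> \<bar>(a - b) $$ (i,j)\<bar>" .
  next
    fix i assume "i < m" thus "(\<Sum>j<m. \<bar>(a - b) $$ (i,j)\<bar>) \<le> s_norm m (a - b)" by (rule s_norm_row)
  next
    fix j assume "j < m" thus "(\<Sum>i<m. \<bar>(a - b) $$ (i,j)\<bar>) \<le> s_norm m (a - b)" by (rule s_norm_col)
  qed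
  moreover have "p \<bullet> (?E *\<^sub>v q) = (\<Sum>i<m. \<Sum>j<m. p$i * ?E$$(i,j) * q$j)"
    unfolding qf_sum[OF E p q] atLeast0LessThan ..
  moreover have "p \<bullet> p = (\<Sum>i<m. (p$i)^2)" using p by (simp add: scalar_prod_def atLeast0LessThan power2_eq_square)
  moreover have "q \<bullet> q = (\<Sum>i<m. (q$i)^2)" using q by (simp add: scalar_prod_def atLeast0LessThan power2_eq_square)
  ultimately show ?thesis by simp
qed

end




lemma sym_entry: assumes S: "S \<in> carrier_mat m m" and sym: "transpose_mat S = S" and i: "i < m" and j: "j < m"
  shows "S $$ (j,i) = S $$ (i,j)"
  using sym S i j by (metis carrier_matD index_transpose_mat(1))

lemma herm_form:
  fixes S :: "real mat" and v :: "complex vec"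
  assumes S: "S \<in> carrier_mat m m" and sym: "transpose_mat S = S" and v: "v \<in> carrier_vec m"
  shows "(\<Sum>i=0..<m. cnj (v$i) * (map_mat complex_of_real S *\<^sub>v v)$i)
    = complex_of_real (map_vec Re v \<bullet> (S *\<^sub>v map_vec Re v) + map_vec Im v \<bullet> (S *\<^sub>v map_vec Im v))"
proof -
  have L: "(\<Sum>i=0..<m. cnj (v$i) * (map_mat complex_of_real S *\<^sub>v v)$i)
     = (\<Sum>i=0..<m. \<Sum>j=0..<m. complex_of_real (S$$(i,j)) * (cnj (v$i) * v$j))"
    using S v by (auto simp: scalar_prod_def sum_distrib_left algebra_simps intro!: sum.cong)
  have cx: "map_vec Re v \<in> carrier_vec m" and cy: "map_vec Im v \<in> carrier_vec m" using v by auto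
  have R: "map_vec Re v \<bullet> (S *\<^sub>v map_vec Re v) + map_vec Im v \<bullet> (S *\<^sub>v map_vec Im v)
     = (\<Sum>i=0..<m. \<Sum>j=0..<m. S$$(i,j) * (Re (v$i) * Re (v$j) + Im (v$i) * Im (v$j)))"
    unfolding qf_sum[OF S cx cx] qf_sum[OF S cy cy]
    using v by (auto simp: sum.distrib[symmetric] algebra_simps intro!: sum.cong)
  have I: "(\<Sum>i=0..<m. \<Sum>j=0..<m. S$$(i,j) * (Re (v$i) * Im (v$j) - Im (v$i) * Re (v$j))) = 0"
  proof -
    have "(\<Sum>i=0..<m. \<Sum>j=0..<m. S$$(i,j) * (Im (v$i) * Re (v$j)))
        = (\<Sum>j=0..<m. \<Sum>i=0..<m. S$$(i,j) * (Im (v$i) * Re (v$j)))" by (rule sum.swap)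
    also have "\<dots> = (\<Sum>i=0..<m. \<Sum>j=0..<m. S$$(i,j) * (Re (v$i) * Im (v$j)))"
      by (intro sum.cong refl) (simp add: sym_entry[OF S sym])
    finally show ?thesis by (simp add: right_diff_distrib sum_subtractf)
  qed
  show ?thesis unfolding L R
  proof (rule complex_eqI)
    show "Re (\<Sum>i=0..<m. \<Sum>j=0..<m. complex_of_real (S$$(i,j)) * (cnj (v$i) * v$j))
      = Re (complex_of_real (\<Sum>i=0..<m. \<Sum>j=0..<m. S$$(i,j) * (Re (v$i) * Re (v$j) + Im (v$i) * Im (v$j))))"
      by (simp add: Re_sum)
    show "Im (\<Sum>i=0..<m. \<Sum>j=0..<m. complex_of_real (S$$(i,j)) * (cnj (v$i) * v$j))
      = Im (complex_of_real (\<Sum>i=0..<m. \<Sum>j=0..<m. S$$(i,j) * (Re (v$i) * Re (v$j) + Im (v$i) * Im (v$j))))"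
      using I by (simp add: Im_sum)
  qed
qed




lemma prod_list_uminus: "prod_list (map uminus xs) = (-1::'a::comm_ring_1) ^ length xs * prod_list xs"
  by (induction xs) auto

lemma prod_list_of_real: "prod_list (map complex_of_real xs) = complex_of_real (prod_list xs)"
  by (induction xs) auto

lemma det_eig:
  fixes A Ainv B :: "real mat"
  assumes A: "A \<in> carrier_mat m m" and Ai: "Ainv \<in> carrier_mat m m" and B: "B \<in> carrier_mat m m"
    and AAi: "A * Ainv = 1\<^sub>m m" and sA: "transpose_mat A = A" and sB: "transpose_mat B = B"
    and L0: "L0 > 0" and lbA: "\<forall>x\<in>carrier_vec m. L0 * (x \<bullet> x) \<le> x \<bullet> (A *\<^sub>v x)"
  shows "\<exists>\<mu>s. length \<mu>s = m \<and> det (Ainv * B) = prod_list \<mu>s \<and>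
    (\<forall>\<mu>\<in>set \<mu>s. \<exists>x y. x \<in> carrier_vec m \<and> y \<in> carrier_vec m \<and> 0 < x \<bullet> x + y \<bullet> y \<and>
        \<mu> * (x \<bullet> (A *\<^sub>v x) + y \<bullet> (A *\<^sub>v y)) = x \<bullet> (B *\<^sub>v x) + y \<bullet> (B *\<^sub>v y))"
proof -
  define C where "C = Ainv * B"
  have C: "C \<in> carrier_mat m m" unfolding C_def using Ai B by simp
  define Cc where "Cc = map_mat complex_of_real C"
  have Cc: "Cc \<in> carrier_mat m m" unfolding Cc_def using C by simp
  define Ac where "Ac = map_mat complex_of_real A"
  define Bc where "Bc = map_mat complex_of_real B"
  have Ac: "Ac \<in> carrier_mat m m" and Bc: "Bc \<in> carrier_mat m m" unfolding Ac_def Bc_def using A B by auto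
  have AC: "A * C = B" unfolding C_def using A Ai B AAi by (simp add: assoc_mult_mat[symmetric, of A m m Ainv m B m])
  have AcCc: "Ac * Cc = Bc" unfolding Ac_def Cc_def Bc_def
    using of_real_hom.mat_hom_mult[OF A C] AC by metis
  obtain as where cp: "char_poly Cc = (\<Prod>a\<leftarrow>as. [:- a, 1:])" and len: "length as = m"
    using char_poly_factorized[OF Cc] by blast
  have key: "\<exists>r x y. a = complex_of_real r \<and> x \<in> carrier_vec m \<and> y \<in> carrier_vec m \<and> 0 < x \<bullet> x + y \<bullet> y \<and>
        r * (x \<bullet> (A *\<^sub>v x) + y \<bullet> (A *\<^sub>v y)) = x \<bullet> (B *\<^sub>v x) + y \<bullet> (B *\<^sub>v y)" if a: "a \<in> set as" for a
  proof -
    have "poly (char_poly Cc) a = 0"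
      using a by (auto simp: cp poly_prod_list prod_list_zero_iff)
    hence "eigenvalue Cc a" using eigenvalue_root_char_poly[OF Cc] by simp
    then obtain v where "eigenvector Cc v a" unfolding eigenvalue_def by blast
    hence v: "v \<in> carrier_vec m" and v0: "v \<noteq> 0\<^sub>v m" and ev: "Cc *\<^sub>v v = a \<cdot>\<^sub>v v"
      unfolding eigenvector_def using Cc by auto
    have "Bc *\<^sub>v v = (Ac * Cc) *\<^sub>v v" using AcCc by simp
    also have "\<dots> = Ac *\<^sub>v (Cc *\<^sub>v v)" using Ac Cc v by simp
    also have "\<dots> = a \<cdot>\<^sub>v (Ac *\<^sub>v v)" unfolding ev using mult_mat_vec[OF Ac v] .
    finally have BA: "Bc *\<^sub>v v = a \<cdot>\<^sub>v (Ac *\<^sub>v v)" .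
    define x where "x = map_vec Re v"
    define y where "y = map_vec Im v"
    have x: "x \<in> carrier_vec m" and y: "y \<in> carrier_vec m" unfolding x_def y_def using v by auto
    define QA where "QA = x \<bullet> (A *\<^sub>v x) + y \<bullet> (A *\<^sub>v y)"
    define QB where "QB = x \<bullet> (B *\<^sub>v x) + y \<bullet> (B *\<^sub>v y)"
    have hB: "(\<Sum>i=0..<m. cnj (v$i) * (Bc *\<^sub>v v)$i) = complex_of_real QB"
      unfolding Bc_def QB_def x_def y_def by (rule herm_form[OF B sB v])
    have hA: "(\<Sum>i=0..<m. cnj (v$i) * (Ac *\<^sub>v v)$i) = complex_of_real QA"
      unfolding Ac_def QA_def x_def y_def by (rule herm_form[OF A sA v])
    have "(\<Sum>i=0..<m. cnj (v$i) * (Bc *\<^sub>v v)$i) = a * (\<Sum>i=0..<m. cnj (v$i) * (Ac *\<^sub>v v)$i)"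
      unfolding BA sum_distrib_left using Ac by (intro sum.cong refl) auto
    hence eq: "complex_of_real QB = a * complex_of_real QA" using hA hB by simp
    have pos: "0 < x \<bullet> x + y \<bullet> y"
    proof -
      obtain i where i: "i < m" and vi: "v $ i \<noteq> 0"
        using v0 v by (metis carrier_vecD eq_vecI index_zero_vec(1) index_zero_vec(2))
      have "x \<bullet> x + y \<bullet> y = (\<Sum>k=0..<m. (Re (v$k))^2 + (Im (v$k))^2)"
        using x y v unfolding x_def y_def by (simp add: scalar_prod_def sum.distrib power2_eq_square)
      also have "\<dots> \<ge> (Re (v$i))^2 + (Im (v$i))^2"
        by (rule member_le_sum) (use i in auto)
      finally show ?thesis using vi
        by (smt (verit) complex_eq_0 sum_power2_ge_zero)
    qed
    have QA: "QA > 0"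
    proof -
      have "L0 * (x \<bullet> x) \<le> x \<bullet> (A *\<^sub>v x)" "L0 * (y \<bullet> y) \<le> y \<bullet> (A *\<^sub>v y)" using lbA x y by auto
      hence "L0 * (x \<bullet> x + y \<bullet> y) \<le> QA" unfolding QA_def by (simp add: distrib_left)
      moreover have "L0 * (x \<bullet> x + y \<bullet> y) > 0" using L0 pos by simp
      ultimately show ?thesis by simp
    qed
    have "a = complex_of_real (QB / QA)" using eq QA
      by (simp add: field_simps)
    moreover have "(QB / QA) * QA = QB" using QA by simp
    ultimately show ?thesis using x y pos unfolding QA_def QB_def by blast
  qed
  define \<mu>s where "\<mu>s = map Re as"
  have as_eq: "as = map complex_of_real \<mu>s"
    unfolding \<mu>s_def by (rule nth_equalityI) (auto dest!: key[OF nth_mem])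
  have "poly (char_poly Cc) 0 = det (- (char_matrix Cc 0))" by (rule char_poly_matrix[OF Cc])
  also have "- (char_matrix Cc 0) = (-1) \<cdot>\<^sub>m Cc" using Cc by (intro eq_matI) (auto simp: char_matrix_def)
  also have "det \<dots> = (-1) ^ m * det Cc" using Cc by simp
  finally have d1: "poly (char_poly Cc) 0 = (-1) ^ m * det Cc" .
  have "poly (char_poly Cc) 0 = prod_list (map uminus as)"
    unfolding cp poly_prod_list by (simp add: o_def)
  also have "\<dots> = (-1) ^ m * prod_list as" using prod_list_uminus[of as] len by simp
  finally have "det Cc = prod_list as" using d1 by simp
  also have "det Cc = complex_of_real (det C)" unfolding Cc_def by simp
  also have "prod_list as = complex_of_real (prod_list \<mu>s)" unfolding as_eq by (rule prod_list_of_real)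
  finally have "det C = prod_list \<mu>s" using of_real_eq_iff by blast
  moreover have "length \<mu>s = m" unfolding \<mu>s_def using len by simp
  moreover have "\<forall>\<mu>\<in>set \<mu>s. \<exists>x y. x \<in> carrier_vec m \<and> y \<in> carrier_vec m \<and> 0 < x \<bullet> x + y \<bullet> y \<and>
        \<mu> * (x \<bullet> (A *\<^sub>v x) + y \<bullet> (A *\<^sub>v y)) = x \<bullet> (B *\<^sub>v x) + y \<bullet> (B *\<^sub>v y)"
    unfolding \<mu>s_def using key by fastforce
  ultimately show ?thesis unfolding C_def by blast
qed




lemma inv_exists:
  fixes A :: "real mat"
  assumes A: "A \<in> carrier_mat m m" and d: "det A \<noteq> 0"
  shows "inv_mat A \<in> carrier_mat m m \<and> A * inv_mat A = 1\<^sub>m m \<and> inv_mat A * A = 1\<^sub>m m"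
proof -
  have "A \<in> Units (ring_mat TYPE(real) m undefined)" by (rule det_non_zero_imp_unit[OF A d])
  then obtain B where B: "B \<in> carrier_mat m m" and AB: "A * B = 1\<^sub>m m" and BA: "B * A = 1\<^sub>m m"
    unfolding Units_def ring_mat_def by auto
  have "inv_mat A = B" by (rule inv_mat_eq[OF A B AB])
  thus ?thesis using B AB BA by simp
qed

lemma inv_sym:
  fixes A Ai :: "real mat"
  assumes A: "A \<in> carrier_mat m m" and Ai: "Ai \<in> carrier_mat m m" and AAi: "A * Ai = 1\<^sub>m m"
    and sA: "transpose_mat A = A" and iA: "inv_mat A = Ai"
  shows "transpose_mat Ai = Ai"
proof -
  have AiA: "Ai * A = 1\<^sub>m m" by (rule mat_mult_left_right_inverse[OF A Ai AAi])
  have "A * transpose_mat Ai = transpose_mat (Ai * A)"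
    using transpose_mult[OF Ai A] sA by simp
  also have "\<dots> = 1\<^sub>m m" using AiA by simp
  finally have "inv_mat A = transpose_mat Ai" by (intro inv_mat_eq[of _ m]) (use A Ai in auto)
  thus ?thesis using iA by simp
qed

lemma inv_norm:
  fixes A Ai :: "real mat"
  assumes A: "A \<in> carrier_mat m m" and Ai: "Ai \<in> carrier_mat m m" and AAi: "A * Ai = 1\<^sub>m m"
    and L0: "L0 > 0" and lb: "\<forall>x\<in>carrier_vec m. L0 * (x \<bullet> x) \<le> x \<bullet> (A *\<^sub>v x)"
    and w: "w \<in> carrier_vec m"
  shows "(Ai *\<^sub>v w) \<bullet> (Ai *\<^sub>v w) \<le> (w \<bullet> w) / L0^2"
proof -
  define y where "y = Ai *\<^sub>v w"
  have y: "y \<in> carrier_vec m" unfolding y_def using Ai w by simp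
  have Ay: "A *\<^sub>v y = w" unfolding y_def using A Ai w AAi by (simp add: assoc_mult_mat_vec[symmetric, of A m m Ai m w])
  have 1: "L0 * (y \<bullet> y) \<le> y \<bullet> w" using lb y Ay by auto
  have yy: "y \<bullet> y = (\<Sum>i=0..<m. y$i * y$i)" and yw: "y \<bullet> w = (\<Sum>i=0..<m. y$i * w$i)" and ww: "w \<bullet> w = (\<Sum>i=0..<m. w$i * w$i)"
    using y w by (auto simp: scalar_prod_def)
  have "2 * L0 * (y \<bullet> w) \<le> L0^2 * (y \<bullet> y) + w \<bullet> w"
  proof -
    have "(\<Sum>i=0..<m. 2 * L0 * (y$i * w$i)) \<le> (\<Sum>i=0..<m. L0^2 * (y$i * y$i) + w$i * w$i)"
    proof (rule sum_mono)
      fix i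
      have "0 \<le> (L0 * y$i - w$i)^2" by simp
      thus "2 * L0 * (y$i * w$i) \<le> L0^2 * (y$i * y$i) + w$i * w$i" by (simp add: power2_eq_square algebra_simps)
    qed
    thus ?thesis unfolding yy yw ww by (simp add: sum_distrib_left sum.distrib)
  qed
  with 1 have "2 * L0 * (L0 * (y \<bullet> y)) \<le> L0^2 * (y \<bullet> y) + w \<bullet> w"
    using L0 by (smt (verit) mult_left_mono)
  hence "L0^2 * (y \<bullet> y) \<le> w \<bullet> w" by (simp add: power2_eq_square algebra_simps)
  hence "y \<bullet> y \<le> (w \<bullet> w) / L0^2" using L0 by (simp add: field_simps)
  thus ?thesis unfolding y_def .
qed

lemma exponent_identity:
  fixes a b Ai Bi :: "real mat"
  assumes a: "a \<in> carrier_mat m m" and b: "b \<in> carrier_mat m m"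
    and Ai: "Ai \<in> carrier_mat m m" and Bi: "Bi \<in> carrier_mat m m"
    and aAi: "a * Ai = 1\<^sub>m m" and bBi: "b * Bi = 1\<^sub>m m" and sa: "transpose_mat a = a" and sAi: "transpose_mat Ai = Ai"
    and w: "w \<in> carrier_vec m"
  shows "w \<bullet> (Ai *\<^sub>v w) - w \<bullet> (Bi *\<^sub>v w) = (Ai *\<^sub>v w) \<bullet> ((b - a) *\<^sub>v (Bi *\<^sub>v w))"
proof -
  define u where "u = Bi *\<^sub>v w"
  define y where "y = Ai *\<^sub>v w"
  have u: "u \<in> carrier_vec m" and y: "y \<in> carrier_vec m" unfolding u_def y_def using Ai Bi w by auto
  have bu: "b *\<^sub>v u = w" unfolding u_def using b Bi w bBi by (simp add: assoc_mult_mat_vec[symmetric, of b m m Bi m w])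
  have AiA: "Ai * a = 1\<^sub>m m" by (rule mat_mult_left_right_inverse[OF a Ai aAi])
  have "(b - a) *\<^sub>v u = b *\<^sub>v u - a *\<^sub>v u" using a b u by (simp add: minus_mult_distrib_mat_vec)
  hence "y \<bullet> ((b - a) *\<^sub>v u) = y \<bullet> w - y \<bullet> (a *\<^sub>v u)"
    using bu y w a u by (simp add: scalar_prod_minus_distrib[of _ m])
  also have "y \<bullet> (a *\<^sub>v u) = (transpose_mat a *\<^sub>v y) \<bullet> u"
    using transpose_vec_mult_scalar[OF a u y] by simp
  also have "transpose_mat a *\<^sub>v y = w" unfolding sa y_def
    using a Ai w aAi by (simp add: assoc_mult_mat_vec[symmetric, of a m m Ai m w])
  also have "y \<bullet> w = w \<bullet> y" using y w by (rule comm_scalar_prod)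
  finally show ?thesis unfolding u_def y_def by simp
qed




lemma prod_list_pos: "\<forall>x\<in>set xs. (0::real) < x \<Longrightarrow> 0 < prod_list xs"
  by (induction xs) auto

lemma det_pos:
  fixes A :: "real mat"
  assumes A: "A \<in> carrier_mat m m" and sA: "transpose_mat A = A"
    and L0: "L0 > 0" and lb: "\<forall>x\<in>carrier_vec m. L0 * (x \<bullet> x) \<le> x \<bullet> (A *\<^sub>v x)"
  shows "det A > 0"
proof -
  have lb1: "\<forall>x::real vec\<in>carrier_vec m. 1 * (x \<bullet> x) \<le> x \<bullet> (1\<^sub>m m *\<^sub>v x)" by auto
  obtain \<mu>s where len: "length \<mu>s = m" and d: "det (1\<^sub>m m * A) = prod_list \<mu>s"
    and ev: "\<forall>\<mu>\<in>set \<mu>s. \<exists>x y. x \<in> carrier_vec m \<and> y \<in> carrier_vec m \<and> 0 < x \<bullet> x + y \<bullet> y \<and>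
        \<mu> * (x \<bullet> (1\<^sub>m m *\<^sub>v x) + y \<bullet> (1\<^sub>m m *\<^sub>v y)) = x \<bullet> (A *\<^sub>v x) + y \<bullet> (A *\<^sub>v y)"
    using det_eig[OF one_carrier_mat one_carrier_mat A _ _ sA _ lb1] by auto
  have "\<forall>\<mu>\<in>set \<mu>s. 0 < \<mu>"
  proof
    fix \<mu> assume "\<mu> \<in> set \<mu>s"
    then obtain x y where x: "x \<in> carrier_vec m" and y: "y \<in> carrier_vec m" and S: "0 < x \<bullet> x + y \<bullet> y"
      and e: "\<mu> * (x \<bullet> (1\<^sub>m m *\<^sub>v x) + y \<bullet> (1\<^sub>m m *\<^sub>v y)) = x \<bullet> (A *\<^sub>v x) + y \<bullet> (A *\<^sub>v y)"
      using ev by blast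
    have e2: "\<mu> * (x \<bullet> x + y \<bullet> y) = x \<bullet> (A *\<^sub>v x) + y \<bullet> (A *\<^sub>v y)" using e x y by simp
    have "L0 * (x \<bullet> x + y \<bullet> y) \<le> x \<bullet> (A *\<^sub>v x) + y \<bullet> (A *\<^sub>v y)" using lb x y by (simp add: distrib_left add_mono)
    moreover have "0 < L0 * (x \<bullet> x + y \<bullet> y)" using L0 S by simp
    ultimately have "0 < \<mu> * (x \<bullet> x + y \<bullet> y)" using e2 by simp
    thus "0 < \<mu>" using S by (simp add: zero_less_mult_iff)
  qed
  hence "0 < prod_list \<mu>s" by (rule prod_list_pos)
  thus ?thesis using d A by simp
qed

lemma scalar_self_nonneg: "(0::real) \<le> x \<bullet> x"
  unfolding scalar_prod_def by (intro sum_nonneg) simp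

lemma main_lemma:
  assumes m: "m \<ge> 1" and lam: "\<forall>i<m. 0 < lam i" and L0: "0 < L0"
    and pa: "pos_def_mat m a" and pb: "pos_def_mat m b"
    and la: "loewner_between m L0 L1 a" and lbb: "loewner_between m L0 L1 b"
    and w: "w \<in> carrier_vec m"
    and \<theta>M: "real m * s_norm m (a - b) / L0 < M"
    and \<phi>M: "(vnorm w)\<^sup>2 * s_norm m (a - b) / L0\<^sup>2 < M"
    and t: "t > 0"
  shows "\<bar>Qm m w (Tilde_inv m lam a t) / Qm m w (Tilde_inv m lam b t) - 1\<bar>
       \<le> (2 + exp M) * ((vnorm w)\<^sup>2 * s_norm m (a - b) / L0\<^sup>2 + real m * s_norm m (a - b) / L0)"
proof -
  have a: "a \<in> carrier_mat m m" and sa: "transpose_mat a = a" using pa unfolding pos_def_mat_def by auto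
  have b: "b \<in> carrier_mat m m" and sb: "transpose_mat b = b" using pb unfolding pos_def_mat_def by auto
  define \<sigma> where "\<sigma> = s_norm m (a - b)"
  have \<sigma>0: "0 \<le> \<sigma>"
  proof -
    have "(\<Sum>j<m. \<bar>(a - b) $$ (0,j)\<bar>) \<le> \<sigma>" unfolding \<sigma>_def by (rule s_norm_row) (use m in auto)
    moreover have "0 \<le> (\<Sum>j<m. \<bar>(a - b) $$ (0,j)\<bar>)" by (rule sum_nonneg) simp
    ultimately show ?thesis by linarith
  qed
  define ta where "ta = tilde_mat m lam a t"
  define tb where "tb = tilde_mat m lam b t"
  have ta: "ta \<in> carrier_mat m m" and tb: "tb \<in> carrier_mat m m"
    unfolding ta_def tb_def using tilde_carrier[OF lam t] by auto
  have sta: "transpose_mat ta = ta" unfolding ta_def by (rule tilde_transpose[OF lam t a sa])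
  have stb: "transpose_mat tb = tb" unfolding tb_def by (rule tilde_transpose[OF lam t b sb])
  have lta: "\<forall>x\<in>carrier_vec m. L0 * (x \<bullet> x) \<le> x \<bullet> (ta *\<^sub>v x)"
    unfolding ta_def using tilde_lower[OF lam t a la] by auto
  have ltb: "\<forall>x\<in>carrier_vec m. L0 * (x \<bullet> x) \<le> x \<bullet> (tb *\<^sub>v x)"
    unfolding tb_def using tilde_lower[OF lam t b lbb] by auto
  have dta: "det ta > 0" by (rule det_pos[OF ta sta L0 lta])
  have dtb: "det tb > 0" by (rule det_pos[OF tb stb L0 ltb])
  define TA where "TA = Tilde_inv m lam a t"
  define TB where "TB = Tilde_inv m lam b t"
  have iA: "inv_mat ta = TA" unfolding TA_def ta_def Tilde_inv_def ..
  have iB: "inv_mat tb = TB" unfolding TB_def tb_def Tilde_inv_def ..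
  have TA: "TA \<in> carrier_mat m m" and taTA: "ta * TA = 1\<^sub>m m" and TAta: "TA * ta = 1\<^sub>m m"
    using inv_exists[OF ta] dta iA by auto
  have TB: "TB \<in> carrier_mat m m" and tbTB: "tb * TB = 1\<^sub>m m" and TBtb: "TB * tb = 1\<^sub>m m"
    using inv_exists[OF tb] dtb iB by auto
  have sTA: "transpose_mat TA = TA" by (rule inv_sym[OF ta TA taTA sta iA])
  have nA: "(TA *\<^sub>v w) \<bullet> (TA *\<^sub>v w) \<le> (w \<bullet> w) / L0^2" by (rule inv_norm[OF ta TA taTA L0 lta w])
  have nB: "(TB *\<^sub>v w) \<bullet> (TB *\<^sub>v w) \<le> (w \<bullet> w) / L0^2" by (rule inv_norm[OF tb TB tbTB L0 ltb w])
  define X where "X = w \<bullet> (TA *\<^sub>v w) - w \<bullet> (TB *\<^sub>v w)"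
  have Xeq: "X = (TA *\<^sub>v w) \<bullet> ((tb - ta) *\<^sub>v (TB *\<^sub>v w))"
    unfolding X_def by (rule exponent_identity[OF ta tb TA TB taTA tbTB sta sTA w])
  have "\<bar>X\<bar> \<le> \<sigma> / 2 * ((TA *\<^sub>v w) \<bullet> (TA *\<^sub>v w) + (TB *\<^sub>v w) \<bullet> (TB *\<^sub>v w))"
    unfolding Xeq \<sigma>_def ta_def tb_def by (rule tilde_diff_bilin[OF lam t a b]) (use TA TB w in auto)
  also have "\<dots> \<le> \<sigma> / 2 * ((w \<bullet> w) / L0^2 + (w \<bullet> w) / L0^2)"
    by (rule mult_left_mono) (use nA nB \<sigma>0 in auto)
  also have "\<dots> = (vnorm w)\<^sup>2 * \<sigma> / L0\<^sup>2"
    unfolding vnorm_def using scalar_self_nonneg[of w] by simp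
  finally have Xb: "\<bar>X\<bar> \<le> (vnorm w)\<^sup>2 * \<sigma> / L0\<^sup>2" .
  obtain \<mu>s where len: "length \<mu>s = m" and dP: "det (TA * tb) = prod_list \<mu>s"
    and ev: "\<forall>\<mu>\<in>set \<mu>s. \<exists>x y. x \<in> carrier_vec m \<and> y \<in> carrier_vec m \<and> 0 < x \<bullet> x + y \<bullet> y \<and>
        \<mu> * (x \<bullet> (ta *\<^sub>v x) + y \<bullet> (ta *\<^sub>v y)) = x \<bullet> (tb *\<^sub>v x) + y \<bullet> (tb *\<^sub>v y)"
    using det_eig[OF ta TA tb taTA sta stb L0 lta] by blast
  have evb: "\<forall>\<mu>\<in>set \<mu>s. 0 < \<mu> \<and> \<bar>\<mu> - 1\<bar> \<le> \<sigma> / L0"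
  proof
    fix \<mu> assume "\<mu> \<in> set \<mu>s"
    then obtain x y where x: "x \<in> carrier_vec m" and y: "y \<in> carrier_vec m" and S: "0 < x \<bullet> x + y \<bullet> y"
      and e: "\<mu> * (x \<bullet> (ta *\<^sub>v x) + y \<bullet> (ta *\<^sub>v y)) = x \<bullet> (tb *\<^sub>v x) + y \<bullet> (tb *\<^sub>v y)"
      using ev by blast
    define QA where "QA = x \<bullet> (ta *\<^sub>v x) + y \<bullet> (ta *\<^sub>v y)"
    define QB where "QB = x \<bullet> (tb *\<^sub>v x) + y \<bullet> (tb *\<^sub>v y)"
    define S where "S = x \<bullet> x + y \<bullet> y"
    have QA: "L0 * S \<le> QA" unfolding QA_def S_def using lta x y by (simp add: distrib_left add_mono)
    have QB: "L0 * S \<le> QB" unfolding QB_def S_def using ltb x y by (simp add: distrib_left add_mono)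
    have LS: "0 < L0 * S" using L0 S unfolding S_def by simp
    have QA0: "0 < QA" using QA LS by simp
    have e: "\<mu> * QA = QB" using e unfolding QA_def QB_def .
    have mu: "0 < \<mu>" using e QA0 QB LS by (smt (verit) zero_less_mult_iff)
    have dx: "x \<bullet> (tb *\<^sub>v x) - x \<bullet> (ta *\<^sub>v x) = x \<bullet> ((tb - ta) *\<^sub>v x)"
      using x ta tb by (simp add: minus_mult_distrib_mat_vec scalar_prod_minus_distrib[of _ m])
    have dy: "y \<bullet> (tb *\<^sub>v y) - y \<bullet> (ta *\<^sub>v y) = y \<bullet> ((tb - ta) *\<^sub>v y)"
      using y ta tb by (simp add: minus_mult_distrib_mat_vec scalar_prod_minus_distrib[of _ m])
    have bx: "\<bar>x \<bullet> ((tb - ta) *\<^sub>v x)\<bar> \<le> \<sigma> / 2 * (x \<bullet> x + x \<bullet> x)"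
      unfolding \<sigma>_def ta_def tb_def by (rule tilde_diff_bilin[OF lam t a b x x])
    have by': "\<bar>y \<bullet> ((tb - ta) *\<^sub>v y)\<bar> \<le> \<sigma> / 2 * (y \<bullet> y + y \<bullet> y)"
      unfolding \<sigma>_def ta_def tb_def by (rule tilde_diff_bilin[OF lam t a b y y])
    have "\<bar>QB - QA\<bar> \<le> \<sigma> * S"
      unfolding QA_def QB_def S_def using dx dy bx by' by (simp add: algebra_simps)
    also have "\<sigma> * S \<le> \<sigma> / L0 * QA"
    proof -
      have "\<sigma> * (L0 * S) \<le> \<sigma> * QA" by (rule mult_left_mono[OF QA \<sigma>0])
      thus ?thesis using L0 by (simp add: field_simps)
    qed
    finally have fQ: "\<bar>QB - QA\<bar> \<le> \<sigma> / L0 * QA" .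
    have "QB - QA = (\<mu> - 1) * QA" using e by (simp add: algebra_simps)
    hence "\<bar>\<mu> - 1\<bar> * QA = \<bar>QB - QA\<bar>" by (simp add: abs_mult abs_of_pos[OF QA0])
    hence "\<bar>\<mu> - 1\<bar> * QA \<le> \<sigma> / L0 * QA" using fQ by simp
    hence "\<bar>\<mu> - 1\<bar> \<le> \<sigma> / L0" using QA0 mult_le_cancel_right_pos by blast
    thus "0 < \<mu> \<and> \<bar>\<mu> - 1\<bar> \<le> \<sigma> / L0" using mu by simp
  qed
  have dTA: "det ta * det TA = 1" using det_mult[OF ta TA] taTA by simp
  have dTB: "det tb * det TB = 1" using det_mult[OF tb TB] tbTB by simp
  have dTApos: "det TA > 0" using dTA dta by (smt (verit) zero_less_mult_iff)
  have dTBpos: "det TB > 0" using dTB dtb by (smt (verit) zero_less_mult_iff)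
  have P: "det TA / det TB = prod_list \<mu>s"
  proof -
    have "det TB = 1 / det tb" using dTB dtb by (simp add: field_simps)
    hence "det TA / det TB = det TA * det tb" using dtb by simp
    also have "\<dots> = det (TA * tb)" using det_mult[OF TA tb] by simp
    finally show ?thesis using dP by simp
  qed
  define K where "K = (2 * pi) powr (- real m / 2)"
  have K: "K > 0" unfolding K_def by simp
  have ratio: "Qm m w TA / Qm m w TB = sqrt (prod_list \<mu>s) * exp (-X/2)"
  proof -
    have "Qm m w TA / Qm m w TB = (sqrt (det TA) / sqrt (det TB)) * (exp (- (w \<bullet> (TA *\<^sub>v w)) / 2) / exp (- (w \<bullet> (TB *\<^sub>v w)) / 2))"
      unfolding Qm_def K_def[symmetric] using K by simp
    also have "sqrt (det TA) / sqrt (det TB) = sqrt (prod_list \<mu>s)" using P by (simp add: real_sqrt_divide[symmetric])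
    also have "exp (- (w \<bullet> (TA *\<^sub>v w)) / 2) / exp (- (w \<bullet> (TB *\<^sub>v w)) / 2) = exp (-X/2)"
      unfolding X_def by (simp add: exp_diff[symmetric] diff_divide_distrib)
    finally show ?thesis .
  qed
  have fin: "\<bar>sqrt (prod_list \<mu>s) * exp (-X/2) - 1\<bar> \<le> (2 + exp M) * ((vnorm w)\<^sup>2 * \<sigma> / L0\<^sup>2 + real m * (\<sigma> / L0))"
    by (rule final_ineq[OF len m evb refl _ Xb]) (use \<theta>M \<phi>M in \<open>auto simp: \<sigma>_def\<close>)
  show ?thesis using fin ratio unfolding TA_def TB_def \<sigma>_def by simp
qed


theorem proposition4p7:
  fixes M :: real
  assumes "M > 0"
  shows "\<exists>c1::real. \<forall>(m::nat) (lam::nat \<Rightarrow> real) (L0::real) (L1::real) (a::real mat) (b::real mat)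
            (w::real vec) (t::real).
     m \<ge> 1 \<longrightarrow>
     (\<forall>i<m. 0 < lam i) \<longrightarrow>
     (\<forall>i j. i \<le> j \<longrightarrow> j < m \<longrightarrow> lam i \<le> lam j) \<longrightarrow>
     0 < L0 \<longrightarrow> L0 \<le> L1 \<longrightarrow>
     pos_def_mat m a \<longrightarrow> pos_def_mat m b \<longrightarrow>
     loewner_between m L0 L1 a \<longrightarrow> loewner_between m L0 L1 b \<longrightarrow>
     w \<in> carrier_vec m \<longrightarrow>
     real m * s_norm m (a - b) / L0 < M \<longrightarrow>
     (vnorm w)\<^sup>2 * s_norm m (a - b) / L0\<^sup>2 < M \<longrightarrow>
     t > 0 \<longrightarrow>
     \<bar>Qm m w (Tilde_inv m lam a t) / Qm m w (Tilde_inv m lam b t) - 1\<bar>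
       \<le> c1 * ((vnorm w)\<^sup>2 * s_norm m (a - b) / L0\<^sup>2 + real m * s_norm m (a - b) / L0)"
    by (intro exI[of _ "2 + exp M"] allI impI) (rule main_lemma; assumption)

end
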